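(* Let $-\tfrac1{13}<s<0$, $N\gg1$ and $0<\gamma_0<2^{-30}$. Then for every function $u$ on $\mathbb{R}^2$ with $Iu\in L^2(\mathbb{R}^2)$, $$|\Lambda_3(\tilde\sigma_3;u,u,u)|\lesssim \gamma_0^{-1}N^{-1+}\|Iu\|_{L^2(\mathbb{R}^2)}^3,$$ with implicit constant independent of $N$ and $\gamma_0$.
   Context: For $s<0$ and $N\ge1$, $m=m_N^s$ is a smooth radial function, non-increasing in $|\zeta|$, with $m(\zeta)=1$ for $|\zeta|\le N$ and $m(\zeta)=(|\zeta|/N)^s$ for $|\zeta|\ge 2N$; $\widehat{Iu}(\zeta)=m(\zeta)\hat u(\zeta)$. For $M:\mathbb{R}^{2k}\to\mathbb{C}$, $\Lambda_k(M;u_1,\dots,u_k)=\int_{\zeta_1+\cdots+\zeta_k=0}M(\zeta_1,\dots,\zeta_k)\hat u_1(\zeta_1)\cdots\hat u_k(\zeta_k)$. For $\zeta_j=(\xi_j,\eta_j)$, $N_j$ is the smallest dyadic number $2^n$ ($n\ge0$) with $|\zeta_j|\le N_j$. $M_3=\sum_{j=1}^3m^2(\zeta_j)(\xi_j+\eta_j)$, $h_3=3i(\xi_1\xi_2\xi_3+\eta_1\eta_2\eta_3)$, $\Omega_{nr}=\{\sum\zeta_j=0,\ \max_j|\zeta_j|\le N\}\cup\{\sum\zeta_j=0,\ |\xi_1\xi_2\xi_3+\eta_1\eta_2\eta_3|\ge\gamma_0N_1N_2N_3\}$, $\tilde\sigma_3=-\frac{2iM_3}{3h_3}\mathbf 1_{\Omega_{nr}}$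 (zero where $M_3=0$). $N^{c+}$ means $N^{c+\varepsilon}$ for arbitrary small $\varepsilon>0$, constants depending on $\varepsilon$. *)

theory Defs
  imports "HOL-Analysis.Analysis"
begin

type_synonym freq = "real \<times> real"

definition admissible_profile :: "real \<Rightarrow> (real \<Rightarrow> real) \<Rightarrow> bool" where
  "admissible_profile s \<mu> \<longleftrightarrow>
     (\<forall>k. \<forall>x. ((deriv ^^ k) \<mu>) differentiable (at x)) \<and>
     (\<forall>r. 0 \<le> r \<and> r \<le> 1 \<longrightarrow> \<mu> r = 1) \<and>
     (\<forall>r. 2 \<le> r \<longrightarrow> \<mu> r = r powr s) \<and>
     (\<forall>r t. 0 \<le> r \<and> r \<le> t \<longrightarrow> \<mu> t \<le> \<mu> r)"

definition mI :: "(real \<Rightarrow> real) \<Rightarrow> real \<Rightarrow> freq \<Rightarrow> real" where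
  "mI \<mu> N \<zeta> = \<mu> (norm \<zeta> / N)"

definition dyad :: "real \<Rightarrow> real" where
  "dyad r = 2 ^ (LEAST n::nat. r \<le> 2 ^ n)"

definition M3 :: "(freq \<Rightarrow> real) \<Rightarrow> freq \<Rightarrow> freq \<Rightarrow> freq \<Rightarrow> real" where
  "M3 m z1 z2 z3 = (\<Sum>z\<leftarrow>[z1, z2, z3]. (m z)^2 * (fst z + snd z))"

definition h3 :: "freq \<Rightarrow> freq \<Rightarrow> freq \<Rightarrow> complex" where
  "h3 z1 z2 z3 = 3 * \<i> * complex_of_real
      (fst z1 * fst z2 * fst z3 + snd z1 * snd z2 * snd z3)"

definition Omega_nr :: "real \<Rightarrow> real \<Rightarrow> (freq \<times> freq \<times> freq) set" where
  "Omega_nr N \<gamma>0 =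
     {(z1, z2, z3). z1 + z2 + z3 = 0 \<and> max (norm z1) (max (norm z2) (norm z3)) \<le> N}
   \<union> {(z1, z2, z3). z1 + z2 + z3 = 0 \<and>
        \<bar>fst z1 * fst z2 * fst z3 + snd z1 * snd z2 * snd z3\<bar>
          \<ge> \<gamma>0 * dyad (norm z1) * dyad (norm z2) * dyad (norm z3)}"

text \<open>\<sigma>~_3 = -2i M_3/(3 h_3) on \<Omega>_nr, 0 elsewhere (division by zero gives 0, which
  only happens where M_3 = 0 on \<Omega>_nr).\<close>
definition sigma3 :: "(freq \<Rightarrow> real) \<Rightarrow> real \<Rightarrow> real \<Rightarrow> freq \<Rightarrow> freq \<Rightarrow> freq \<Rightarrow> complex" where
  "sigma3 m N \<gamma>0 z1 z2 z3 =
     (if (z1, z2, z3) \<in> Omega_nr N \<gamma>0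
      then - 2 * \<i> * complex_of_real (M3 m z1 z2 z3) / (3 * h3 z1 z2 z3) else 0)"

text \<open>\<Lambda>_3(M; f1,f2,f3) given the Fourier transforms f_j = u_j^, integrated over the hyperplane
  \<zeta>1+\<zeta>2+\<zeta>3 = 0 parametrised by (\<zeta>1, \<zeta>2).\<close>
definition Lambda3_integrand ::
  "(freq \<Rightarrow> freq \<Rightarrow> freq \<Rightarrow> complex) \<Rightarrow> (freq \<Rightarrow> complex) \<Rightarrow> (freq \<Rightarrow> complex)
     \<Rightarrow> (freq \<Rightarrow> complex) \<Rightarrow> freq \<times> freq \<Rightarrow> complex" where
  "Lambda3_integrand M f1 f2 f3 = (\<lambda>(z1, z2). M z1 z2 (- z1 - z2) * f1 z1 * f2 z2 * f3 (- z1 - z2))"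

definition Lambda3 ::
  "(freq \<Rightarrow> freq \<Rightarrow> freq \<Rightarrow> complex) \<Rightarrow> (freq \<Rightarrow> complex) \<Rightarrow> (freq \<Rightarrow> complex)
     \<Rightarrow> (freq \<Rightarrow> complex) \<Rightarrow> complex" where
  "Lambda3 M f1 f2 f3 = integral\<^sup>L lborel (Lambda3_integrand M f1 f2 f3)"

text \<open>\<parallel>Iu\<parallel>_{L^2} expressed on the Fourier side (Plancherel): \<parallel>m u^\<parallel>_{L^2}.\<close>
definition L2norm_I :: "(freq \<Rightarrow> real) \<Rightarrow> (freq \<Rightarrow> complex) \<Rightarrow> real" where
  "L2norm_I m f = sqrt (\<integral>z. (norm (complex_of_real (m z) * f z))^2 \<partial>lborel)"

end

theory Submission
  imports Defs
begin


lemma nn_integral_reflect: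
  fixes t :: "'a::euclidean_space" and g :: "'a \<Rightarrow> ennreal"
  assumes [measurable]: "g \<in> borel_measurable borel"
  shows "(\<integral>\<^sup>+x. g (t - x) \<partial>lborel) = (\<integral>\<^sup>+x. g x \<partial>lborel)"
proof -
  have eq: "(lborel::'a measure) = density (distr lborel borel (\<lambda>x. t + (-1::real) *\<^sub>R x)) (\<lambda>_. 1)"
    using lborel_affine[of "-1::real" t] by simp
  have "(\<integral>\<^sup>+x. g x \<partial>lborel) = (\<integral>\<^sup>+x. g x \<partial>(density (distr lborel borel (\<lambda>x. t + (-1::real) *\<^sub>R x)) (\<lambda>_. 1)))"
    using eq by metis
  also have "\<dots> = (\<integral>\<^sup>+x. g (t - x) \<partial>lborel)"
    by (simp add: nn_integral_density nn_integral_distr)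
  finally show ?thesis by simp
qed

lemma powr_tail_finite:
  fixes e :: real assumes e: "e < -1"
  shows "(\<integral>\<^sup>+x. ennreal (indicator {1..} x * x powr e) \<partial>lborel) < \<infinity>"
proof -
  have "(\<integral>\<^sup>+x. ennreal (indicator {1..} x * x powr e) \<partial>lborel) = -(1 powr (e+1)) / (e+1)"
    by (rule nn_integral_has_integral_lebesgue[OF _ has_integral_powr_to_inf[OF e]]) auto
  then show ?thesis by simp
qed

lemma powr_int_finite:
  fixes e :: real assumes e: "e < -1"
  shows "(\<integral>\<^sup>+x. ennreal (max 1 \<bar>x\<bar> powr e) \<partial>lborel) < \<infinity>"
proof -
  define h where "h x = ennreal (indicator {1..} x * x powr e)" for x :: real
  have hm[measurable]: "h \<in> borel_measurable borel" unfolding h_def by measurable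
  have le: "ennreal (max 1 \<bar>x\<bar> powr e) \<le> indicator {-1..1} x + h x + h (0 - x)" for x :: real
  proof (cases "\<bar>x\<bar> \<le> 1")
    case True
    then have "max 1 \<bar>x\<bar> powr e = 1" by simp
    then show ?thesis using True by (auto simp: indicator_def h_def)
  next
    case False
    then show ?thesis
    proof (cases "x \<ge> 1")
      case True then show ?thesis by (simp add: h_def indicator_def)
    next
      case False2: False
      with False have "x \<le> -1" by auto
      then show ?thesis by (simp add: h_def indicator_def)
    qed
  qed
  have "(\<integral>\<^sup>+x. ennreal (max 1 \<bar>x\<bar> powr e) \<partial>lborel) \<le> (\<integral>\<^sup>+x. indicator {-1..1} x + h x + h (0 - x) \<partial>lborel)"
    by (rule nn_integral_mono) (rule le)
  also have "\<dots> = (\<integral>\<^sup>+x. indicator {-1..1::real} x \<partial>lborel) + (\<integral>\<^sup>+x. h x \<partial>lborel) + (\<integral>\<^sup>+x. h (0 - x) \<partial>lborel)"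
    by (subst nn_integral_add; (measurable)?)+
  also have "\<dots> = 2 + 2 * (\<integral>\<^sup>+x. h x \<partial>lborel)"
  proof -
    have "(\<integral>\<^sup>+x. indicator {-1..1::real} x \<partial>lborel) = 2" by (subst nn_integral_indicator) auto
    moreover have "(\<integral>\<^sup>+x. h (0 - x) \<partial>lborel) = (\<integral>\<^sup>+x. h x \<partial>lborel)"
      using nn_integral_reflect[OF hm, of 0] .
    ultimately show ?thesis by (simp only: mult_2 add.assoc)
  qed
  also have "\<dots> < \<infinity>" using powr_tail_finite[OF e] unfolding h_def
    by (simp add: ennreal_mult_less_top)
  finally show ?thesis .
qed

lemma key_t:
  fixes t \<epsilon> s :: real
  assumes t: "1/2 < t" and e: "0 < \<epsilon>" "\<epsilon> \<le> 1/2" and s: "-1/13 < s" "s < 0"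
  shows "1 \<le> 2 * t powr (1-\<epsilon>) * ((max 1 t) powr s)^2"
proof (cases "t \<le> 1")
  case True
  have "(1/2::real) powr (1-\<epsilon>) \<le> t powr (1-\<epsilon>)"
    using t e by (intro powr_mono2) auto
  moreover have "(1/2::real) \<le> (1/2) powr (1-\<epsilon>)"
    using powr_mono'[of "1-\<epsilon>" 1 "1/2::real"] e by simp
  moreover have "2 * t powr (1-\<epsilon>) * ((max 1 t) powr s)^2 = 2 * t powr (1-\<epsilon>)" using True by simp
  ultimately show ?thesis by linarith
next
  case False
  then have m: "max 1 t = t" by simp
  have sq: "(t powr s) ^ 2 = t powr (2 * s)"
  proof -
    have "t powr (2 * s) = t powr (s + s)" by (simp only: mult_2)
    also have "\<dots> = t powr s * t powr s" by (rule powr_add)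
    finally show ?thesis by (simp only: power2_eq_square)
  qed
  have "t powr (1 - \<epsilon> + 2 * s) = t powr (1-\<epsilon>) * t powr (2 * s)" by (rule powr_add)
  then have eq: "t powr (1-\<epsilon>) * ((max 1 t) powr s)^2 = t powr (1 - \<epsilon> + 2 * s)"
    using m sq by simp
  have "1 \<le> t powr (1 - \<epsilon> + 2 * s)"
    using False e s by (intro ge_one_powr_ge_zero) auto
  then show ?thesis using eq by linarith
qed


lemma core_abs:
  fixes N \<epsilon> s x y uj uk ul :: real
  assumes N: "1 \<le> N" and e: "0 < \<epsilon>" "\<epsilon> \<le> 1/2" and s: "-1/13 < s" "s < 0"
    and y: "1 \<le> y" "y \<le> x" and x: "N/2 < x"
    and uj: "0 < uj" "uj \<le> 1"
    and uk: "(max 1 (x/N)) powr s / 2 \<le> uk" and ul: "(max 1 (x/N)) powr s / 2 \<le> ul"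
  shows "uj^2 / (x*y) \<le> 8 * N powr (\<epsilon>-1) * uj * uk * ul * y powr (-1-\<epsilon>)"
proof -
  define t where "t = x / N"
  define q where "q = (max 1 t) powr s"
  have Npos: "0 < N" using N by simp
  have t: "1/2 < t" using x Npos unfolding t_def by (simp add: field_simps)
  have xpos: "0 < x" using y by simp
  have xt: "x = N * t" using Npos unfolding t_def by simp
  have qpos: "0 < q" unfolding q_def by simp
  have K: "1 \<le> 2 * t powr (1-\<epsilon>) * q^2" unfolding q_def using key_t[OF t e s] .
  have ukul: "q^2/4 \<le> uk * ul"
  proof -
    have "(q/2) * (q/2) \<le> uk * ul"
    proof (rule mult_mono)
      show "q/2 \<le> uk" "q/2 \<le> ul" using uk ul unfolding q_def t_def by auto
      show "0 \<le> uk" using uk qpos unfolding q_def t_def by linarith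
      show "0 \<le> q/2" using qpos by simp
    qed
    then show ?thesis by (simp add: power2_eq_square)
  qed
  have step1: "t powr \<epsilon> \<le> 2 * t * q^2"
  proof -
    have "t powr \<epsilon> * 1 \<le> t powr \<epsilon> * (2 * t powr (1-\<epsilon>) * q^2)"
      using K by (intro mult_left_mono) auto
    also have "t powr \<epsilon> * t powr (1-\<epsilon>) = t"
      using t by (simp add: powr_add[symmetric])
    then have "t powr \<epsilon> * (2 * t powr (1-\<epsilon>) * q^2) = 2 * t * q^2"
      by (metis mult.commute mult.left_commute)
    finally show ?thesis by simp
  qed
  have step2: "y powr \<epsilon> \<le> 2 * N powr (\<epsilon>-1) * x * q^2"
  proof -
    have "y powr \<epsilon> \<le> x powr \<epsilon>" using y e by (intro powr_mono2) auto
    also have "x powr \<epsilon> = N powr \<epsilon> * t powr \<epsilon>" using xt Npos t by (simp add: powr_mult)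
    also have "\<dots> \<le> N powr \<epsilon> * (2 * t * q^2)" using step1 by (intro mult_left_mono) auto
    also have "N powr (\<epsilon>-1) * N = N powr \<epsilon>" using Npos by (simp add: powr_diff)
    then have "N powr \<epsilon> * (2 * t * q^2) = 2 * N powr (\<epsilon>-1) * x * q^2"
      using xt by (metis mult.commute mult.left_commute)
    finally show ?thesis .
  qed
  have ypos: "0 < y" using y by simp
  have yinv: "y powr (-1-\<epsilon>) = 1 / (y * y powr \<epsilon>)"
    using ypos by (simp add: powr_diff powr_minus divide_inverse powr_add[symmetric])
  have step3: "1 / (x*y) \<le> 2 * N powr (\<epsilon>-1) * q^2 * y powr (-1-\<epsilon>)"
  proof -
    have "0 < y powr \<epsilon>" using ypos by simp
    then show ?thesis using step2 xpos ypos unfolding yinv by (simp add: field_simps)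
  qed
  have "uj^2 / (x*y) \<le> uj * (1/(x*y))"
    using uj xpos ypos by (simp add: power2_eq_square field_simps mult_left_le)
  also have "\<dots> \<le> uj * (2 * N powr (\<epsilon>-1) * q^2 * y powr (-1-\<epsilon>))"
    using step3 uj by (intro mult_left_mono) auto
  also have "\<dots> = 8 * N powr (\<epsilon>-1) * uj * (q^2/4) * y powr (-1-\<epsilon>)" by simp
  also have "\<dots> \<le> 8 * N powr (\<epsilon>-1) * uj * (uk * ul) * y powr (-1-\<epsilon>)"
    using ukul uj by (intro mult_right_mono mult_left_mono) auto
  finally show ?thesis by (simp add: mult.assoc)
qed


context
  fixes s :: real and \<mu> :: "real \<Rightarrow> real"
  assumes adm: "admissible_profile s \<mu>" and s1: "-1/13 < s" and s2: "s < 0"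
begin

lemma mu_one: "0 \<le> r \<Longrightarrow> r \<le> 1 \<Longrightarrow> \<mu> r = 1"
  using adm unfolding admissible_profile_def by blast
lemma mu_big: "2 \<le> r \<Longrightarrow> \<mu> r = r powr s"
  using adm unfolding admissible_profile_def by blast
lemma mu_mono: "0 \<le> r \<Longrightarrow> r \<le> t \<Longrightarrow> \<mu> t \<le> \<mu> r"
  using adm unfolding admissible_profile_def by blast

lemma mu_le1: "0 \<le> r \<Longrightarrow> \<mu> r \<le> 1"
  using mu_mono[of 0 r] mu_one[of 0] by simp

lemma mu_lower: assumes "0 \<le> r" shows "(max 1 r) powr s / 2 \<le> \<mu> r"
proof (cases "r \<le> 2")
  case True
  have "\<mu> 2 \<le> \<mu> r" using mu_mono[of r 2] True assms by simp
  moreover have "\<mu> 2 = 2 powr s" using mu_big[of 2] by simp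
  moreover have "2 powr (-1) \<le> (2::real) powr s" using s1 by (intro powr_mono) auto
  moreover have "(max 1 r) powr s \<le> 1" using powr_mono[of s 0 "max 1 r"] s2 by (simp split: if_splits)
  ultimately show ?thesis by (simp add: powr_minus)
next
  case False
  then have "\<mu> r = r powr s" using mu_big by simp
  moreover have "max 1 r = r" using False by simp
  moreover have "0 < r powr s" using False by simp
  ultimately show ?thesis by simp
qed

lemma mu_pos: assumes "0 \<le> r" shows "0 < \<mu> r"
proof -
  have "0 < (max 1 r) powr s / 2" by simp
  then show ?thesis using mu_lower[OF assms] by linarith
qed

lemma mu_cont: "continuous_on UNIV \<mu>"
proof -
  have "\<mu> differentiable (at x)" for x
    using adm unfolding admissible_profile_def by (metis funpow_0)
  then show ?thesis
    by (simp add: continuous_at_imp_continuous_on differentiable_imp_continuous_within)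
qed


lemma max_div_eq: "1 \<le> N \<Longrightarrow> max 1 (max 1 a / N) = max 1 (a / (N::real))"
  by (auto simp: max_def field_simps)

lemma term_ord:
  fixes N \<epsilon> aj ak al :: real
  assumes N: "1 \<le> N" and e: "0 < \<epsilon>" "\<epsilon> \<le> 1/2"
    and nn: "0 \<le> aj" "0 \<le> ak" "0 \<le> al" and ord: "al \<le> ak" and big: "N/2 < ak"
  shows "\<mu> (aj/N)^2 / (max 1 ak * max 1 al)
     \<le> 8 * N powr (\<epsilon>-1) * \<mu> (aj/N) * \<mu> (ak/N) * \<mu> (al/N) * ((max 1 ak) powr (-1-\<epsilon>) + (max 1 al) powr (-1-\<epsilon>))"
proof -
  have Npos: "0 < N" using N by simp
  have uk: "(max 1 (max 1 ak/N)) powr s / 2 \<le> \<mu> (ak/N)"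
    using mu_lower[of "ak/N"] nn Npos max_div_eq[OF N] by simp
  have "(max 1 (ak/N)) powr s \<le> (max 1 (al/N)) powr s"
    using s2 ord Npos by (intro powr_mono2') (auto simp: max_def divide_right_mono)
  then have ul: "(max 1 (max 1 ak/N)) powr s / 2 \<le> \<mu> (al/N)"
    using mu_lower[of "al/N"] nn Npos max_div_eq[OF N] by simp
  have c: "\<mu> (aj/N)^2 / (max 1 ak * max 1 al) \<le> 8 * N powr (\<epsilon>-1) * \<mu> (aj/N) * \<mu> (ak/N) * \<mu> (al/N) * (max 1 al) powr (-1-\<epsilon>)"
    using core_abs[OF N e s1 s2, of "max 1 al" "max 1 ak" "\<mu> (aj/N)" "\<mu> (ak/N)" "\<mu> (al/N)"]
      uk ul ord big nn Npos mu_pos[of "aj/N"] mu_le1[of "aj/N"] by (simp add: max_def)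
  have "0 \<le> 8 * N powr (\<epsilon>-1) * \<mu> (aj/N) * \<mu> (ak/N) * \<mu> (al/N)"
    using mu_pos[of "aj/N"] mu_pos[of "ak/N"] mu_pos[of "al/N"] nn Npos by simp
  then have "8 * N powr (\<epsilon>-1) * \<mu> (aj/N) * \<mu> (ak/N) * \<mu> (al/N) * (max 1 al) powr (-1-\<epsilon>)
     \<le> 8 * N powr (\<epsilon>-1) * \<mu> (aj/N) * \<mu> (ak/N) * \<mu> (al/N) * ((max 1 ak) powr (-1-\<epsilon>) + (max 1 al) powr (-1-\<epsilon>))"
    by (intro mult_left_mono) auto
  with c show ?thesis by linarith
qed

lemma term_sym:
  fixes N \<epsilon> aj ak al :: real
  assumes N: "1 \<le> N" and e: "0 < \<epsilon>" "\<epsilon> \<le> 1/2"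
    and nn: "0 \<le> aj" "0 \<le> ak" "0 \<le> al"
    and tri: "aj \<le> ak + al" "ak \<le> aj + al" "al \<le> aj + ak"
    and big: "N < aj \<or> N < ak \<or> N < al"
  shows "\<mu> (aj/N)^2 / (max 1 ak * max 1 al)
     \<le> 8 * N powr (\<epsilon>-1) * \<mu> (aj/N) * \<mu> (ak/N) * \<mu> (al/N) * ((max 1 ak) powr (-1-\<epsilon>) + (max 1 al) powr (-1-\<epsilon>))"
proof (cases "al \<le> ak")
  case True
  have "N/2 < ak" using big tri True N by auto
  then show ?thesis using term_ord[OF N e nn True] by simp
next
  case False
  have "N/2 < al" using big tri False N by auto
  then have "\<mu> (aj/N)^2 / (max 1 al * max 1 ak)
     \<le> 8 * N powr (\<epsilon>-1) * \<mu> (aj/N) * \<mu> (al/N) * \<mu> (ak/N) * ((max 1 al) powr (-1-\<epsilon>) + (max 1 ak) powr (-1-\<epsilon>))"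
    using False term_ord[OF N e nn(1) nn(3) nn(2)] by simp
  then show ?thesis by (simp add: ac_simps)
qed

end


definition psi :: "real \<Rightarrow> freq \<Rightarrow> real" where
  "psi \<epsilon> z = (max 1 \<bar>fst z\<bar> * max 1 \<bar>snd z\<bar>) powr (-(1+\<epsilon>)/2)"

lemma abs_fst_le: "\<bar>fst z\<bar> \<le> norm (z::freq)"
proof -
  have "sqrt ((fst z)^2) \<le> sqrt ((fst z)^2 + (snd z)^2)" by (intro real_sqrt_le_mono) simp
  then show ?thesis unfolding norm_prod_def by simp
qed

lemma abs_snd_le: "\<bar>snd z\<bar> \<le> norm (z::freq)"
proof -
  have "sqrt ((snd z)^2) \<le> sqrt ((fst z)^2 + (snd z)^2)" by (intro real_sqrt_le_mono) simp
  then show ?thesis unfolding norm_prod_def by simp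
qed

lemma psi_ge: assumes "0 < \<epsilon>" shows "(max 1 (norm z)) powr (-1-\<epsilon>) \<le> psi \<epsilon> z"
proof -
  have a: "max 1 \<bar>fst z\<bar> \<le> max 1 (norm z)" using abs_fst_le[of z] by auto
  have b: "max 1 \<bar>snd z\<bar> \<le> max 1 (norm z)" using abs_snd_le[of z] by auto
  have "max 1 \<bar>fst z\<bar> * max 1 \<bar>snd z\<bar> \<le> max 1 (norm z) * max 1 (norm z)"
    using a b by (intro mult_mono) auto
  then have "(max 1 (norm z) * max 1 (norm z)) powr (-(1+\<epsilon>)/2) \<le> psi \<epsilon> z"
    unfolding psi_def using assms by (intro powr_mono2') auto
  also have "(max 1 (norm z) * max 1 (norm z)) powr (-(1+\<epsilon>)/2) = (max 1 (norm z)) powr (-(1+\<epsilon>)/2) * (max 1 (norm z)) powr (-(1+\<epsilon>)/2)"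
    by (rule powr_mult)
  also have "\<dots> = (max 1 (norm z)) powr (-(1+\<epsilon>)/2 + -(1+\<epsilon>)/2)"
    by (rule powr_add[symmetric])
  also have "-(1+\<epsilon>)/2 + -(1+\<epsilon>)/2 = -1-\<epsilon>" by simp
  finally show ?thesis .
qed

lemma psi_nonneg: "0 \<le> psi \<epsilon> z" unfolding psi_def by simp

lemma dyad_ge: "max 1 r \<le> dyad r"
proof -
  obtain n :: nat where "r < 2 ^ n" using real_arch_pow[of 2 r] by auto
  then have ex: "\<exists>n::nat. r \<le> 2 ^ n" by (auto intro: less_imp_le)
  have "r \<le> 2 ^ (LEAST n::nat. r \<le> 2 ^ n)" using LeastI_ex[OF ex] .
  moreover have "(1::real) \<le> 2 ^ (LEAST n::nat. r \<le> 2 ^ n)" by simp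
  ultimately show ?thesis unfolding dyad_def by simp
qed

lemma dyad_mono: "mono dyad"
proof
  fix r t :: real assume rt: "r \<le> t"
  obtain n :: nat where "t < 2 ^ n" using real_arch_pow[of 2 t] by auto
  then have ex: "\<exists>n::nat. t \<le> 2 ^ n" by (auto intro: less_imp_le)
  have "t \<le> 2 ^ (LEAST n::nat. t \<le> 2 ^ n)" using LeastI_ex[OF ex] .
  then have "(LEAST n::nat. r \<le> 2 ^ n) \<le> (LEAST n::nat. t \<le> 2 ^ n)"
    using rt by (intro Least_le) auto
  then show "dyad r \<le> dyad t" unfolding dyad_def by (intro power_increasing) auto
qed


context
  fixes s :: real and \<mu> :: "real \<Rightarrow> real"
  assumes adm: "admissible_profile s \<mu>" and s1: "-1/13 < s" and s2: "s < 0"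
begin

lemma sigma_bound:
  fixes N \<epsilon> \<gamma>0 :: real and z1 z2 z3 :: freq
  assumes N: "1 \<le> N" and e: "0 < \<epsilon>" "\<epsilon> \<le> 1/2" and g: "0 < \<gamma>0" and sum: "z1 + z2 + z3 = 0"
  shows "norm (sigma3 (mI \<mu> N) N \<gamma>0 z1 z2 z3) \<le> 16/\<gamma>0 * N powr (\<epsilon>-1) * mI \<mu> N z1 * mI \<mu> N z2 * mI \<mu> N z3
            * (psi \<epsilon> z1 + psi \<epsilon> z2 + psi \<epsilon> z3)"
proof -
  define a1 where "a1 = norm z1"
  define a2 where "a2 = norm z2"
  define a3 where "a3 = norm z3"
  define u1 where "u1 = \<mu> (a1/N)"
  define u2 where "u2 = \<mu> (a2/N)"
  define u3 where "u3 = \<mu> (a3/N)"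
  define w1 where "w1 = max 1 a1"
  define w2 where "w2 = max 1 a2"
  define w3 where "w3 = max 1 a3"
  define P where "P = fst z1 * fst z2 * fst z3 + snd z1 * snd z2 * snd z3"
  have Npos: "0 < N" using N by simp
  have mI: "mI \<mu> N z1 = u1" "mI \<mu> N z2 = u2" "mI \<mu> N z3 = u3"
    unfolding mI_def u1_def u2_def u3_def a1_def a2_def a3_def by simp_all
  have upos: "0 < u1" "0 < u2" "0 < u3" unfolding u1_def u2_def u3_def a1_def a2_def a3_def
    using mu_pos[OF adm s1 s2] Npos by simp_all
  have psi0: "0 \<le> psi \<epsilon> z1 + psi \<epsilon> z2 + psi \<epsilon> z3" using psi_nonneg by (simp add: add_nonneg_nonneg)
  have R0: "0 \<le> 16/\<gamma>0 * N powr (\<epsilon>-1) * mI \<mu> N z1 * mI \<mu> N z2 * mI \<mu> N z3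
            * (psi \<epsilon> z1 + psi \<epsilon> z2 + psi \<epsilon> z3)"
    unfolding mI using upos g psi0 by simp
  show ?thesis
  proof (cases "(z1, z2, z3) \<in> Omega_nr N \<gamma>0")
    case False
    then show ?thesis using R0 by (simp add: sigma3_def)
  next
    case inO: True
    show ?thesis
    proof (cases "max (norm z1) (max (norm z2) (norm z3)) \<le> N")
      case True
      have "u1 = 1" "u2 = 1" "u3 = 1" unfolding u1_def u2_def u3_def a1_def a2_def a3_def
        using True Npos by (auto intro!: mu_one[OF adm s1 s2] simp: field_simps)
      moreover have "fst z1 + fst z2 + fst z3 = 0" "snd z1 + snd z2 + snd z3 = 0"
        using sum by (metis fst_add fst_zero, metis snd_add snd_zero)
      ultimately have "M3 (mI \<mu> N) z1 z2 z3 = 0"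
        unfolding M3_def using mI by (simp add: algebra_simps)
      then show ?thesis using R0 by (simp add: sigma3_def)
    next
      case False
      then have Pge0: "\<gamma>0 * dyad a1 * dyad a2 * dyad a3 \<le> \<bar>P\<bar>"
        using inO unfolding Omega_nr_def P_def a1_def a2_def a3_def by auto
      have wpos: "1 \<le> w1" "1 \<le> w2" "1 \<le> w3" unfolding w1_def w2_def w3_def by simp_all
      have "w1 * w2 * w3 \<le> dyad a1 * dyad a2 * dyad a3"
        using dyad_ge[of a1] dyad_ge[of a2] dyad_ge[of a3] wpos unfolding w1_def w2_def w3_def
        by (intro mult_mono) auto
      then have Pge: "\<gamma>0 * (w1 * w2 * w3) \<le> \<bar>P\<bar>"
        using Pge0 g by (smt (verit) mult.assoc mult_left_mono)
      have w123: "0 < w1 * w2 * w3" using wpos by simp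
      have Ppos: "0 < \<bar>P\<bar>" using Pge g w123 by (smt (verit) mult_pos_pos)
      have fs: "\<bar>fst z + snd z\<bar> \<le> 2 * max 1 (norm z)" for z :: freq
        using abs_fst_le[of z] abs_snd_le[of z] by linarith
      have M3le: "\<bar>M3 (mI \<mu> N) z1 z2 z3\<bar> \<le> 2 * (u1^2 * w1 + u2^2 * w2 + u3^2 * w3)"
      proof -
        have "M3 (mI \<mu> N) z1 z2 z3 = u1^2 * (fst z1 + snd z1) + u2^2 * (fst z2 + snd z2) + u3^2 * (fst z3 + snd z3)"
          unfolding M3_def using mI by simp
        moreover have "\<bar>u1^2 * (fst z1 + snd z1)\<bar> \<le> u1^2 * (2 * w1)"
          using fs[of z1] unfolding w1_def a1_def by (simp add: abs_mult mult_left_mono)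
        moreover have "\<bar>u2^2 * (fst z2 + snd z2)\<bar> \<le> u2^2 * (2 * w2)"
          using fs[of z2] unfolding w2_def a2_def by (simp add: abs_mult mult_left_mono)
        moreover have "\<bar>u3^2 * (fst z3 + snd z3)\<bar> \<le> u3^2 * (2 * w3)"
          using fs[of z3] unfolding w3_def a3_def by (simp add: abs_mult mult_left_mono)
        ultimately show ?thesis by (simp add: algebra_simps)
      qed
      have nsig: "norm (sigma3 (mI \<mu> N) N \<gamma>0 z1 z2 z3) = 2 * \<bar>M3 (mI \<mu> N) z1 z2 z3\<bar> / (9 * \<bar>P\<bar>)"
      proof -
        define M where "M = M3 (mI \<mu> N) z1 z2 z3"
        have h: "h3 z1 z2 z3 = 3 * \<i> * complex_of_real P" unfolding h3_def P_def by simp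
        have "sigma3 (mI \<mu> N) N \<gamma>0 z1 z2 z3 = - 2 * \<i> * complex_of_real M / (3 * (3 * \<i> * complex_of_real P))"
          using inO unfolding sigma3_def h M_def by simp
        also have "\<dots> = complex_of_real (- 2 * M / (9 * P))"
          using Ppos by (simp add: field_simps)
        finally have "norm (sigma3 (mI \<mu> N) N \<gamma>0 z1 z2 z3) = \<bar>- 2 * M / (9 * P)\<bar>" by (simp only: norm_of_real)
        then show ?thesis unfolding M_def by (simp add: abs_mult)
      qed
      define S where "S = u1^2 * w1 + u2^2 * w2 + u3^2 * w3"
      define W where "W = w1 * w2 * w3"
      have S0: "0 \<le> S" unfolding S_def using wpos by (simp add: add_nonneg_nonneg)
      have b1: "norm (sigma3 (mI \<mu> N) N \<gamma>0 z1 z2 z3) \<le> S / (\<gamma>0 * W)"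
      proof -
        have "2 * \<bar>M3 (mI \<mu> N) z1 z2 z3\<bar> / (9 * \<bar>P\<bar>) \<le> 2 * (2 * S) / (9 * (\<gamma>0 * W))"
          using M3le Pge Ppos g w123 S0 unfolding S_def[symmetric] W_def[symmetric]
          by (intro frac_le) auto
        also have "\<dots> \<le> S / (\<gamma>0 * W)"
          using S0 g w123 unfolding W_def[symmetric] by (simp add: field_simps)
        finally show ?thesis using nsig by simp
      qed
      have b2: "S / W = u1^2 / (w2 * w3) + u2^2 / (w1 * w3) + u3^2 / (w1 * w2)"
        unfolding S_def W_def using wpos by (simp add: field_simps)
      have z3eq: "z3 = - (z1 + z2)" using sum add_eq_0_iff[of "z1+z2" z3] by simp
      have tri: "a3 \<le> a1 + a2" "a1 \<le> a2 + a3" "a2 \<le> a1 + a3"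
      proof -
        have "a3 = norm (z1 + z2)" unfolding a3_def z3eq by (rule norm_minus_cancel)
        then show "a3 \<le> a1 + a2" unfolding a1_def a2_def using norm_triangle_ineq[of z1 z2] by simp
        have "z1 + (z2 + z3) = 0" using sum by (simp add: add.assoc)
        then have "z1 = - (z2 + z3)" using add_eq_0_iff[of "z2+z3" z1] by (simp add: add.commute)
        then have "a1 = norm (z2 + z3)" unfolding a1_def by (metis norm_minus_cancel)
        then show "a1 \<le> a2 + a3" unfolding a2_def a3_def using norm_triangle_ineq[of z2 z3] by simp
        have "z2 + (z1 + z3) = 0" using sum by (simp add: algebra_simps)
        then have "z2 = - (z1 + z3)" using add_eq_0_iff[of "z1+z3" z2] by (simp add: add.commute)
        then have "a2 = norm (z1 + z3)" unfolding a2_def by (metis norm_minus_cancel)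
        then show "a2 \<le> a1 + a3" unfolding a1_def a3_def using norm_triangle_ineq[of z1 z3] by simp
      qed
      have nn: "0 \<le> a1" "0 \<le> a2" "0 \<le> a3" unfolding a1_def a2_def a3_def by simp_all
      have big: "N < a1 \<or> N < a2 \<or> N < a3" using False unfolding a1_def a2_def a3_def by auto
      define V1 where "V1 = w1 powr (-1-\<epsilon>)"
      define V2 where "V2 = w2 powr (-1-\<epsilon>)"
      define V3 where "V3 = w3 powr (-1-\<epsilon>)"
      define c where "c = 8 * N powr (\<epsilon>-1) * u1 * u2 * u3"
      have t1: "u1^2 / (w2 * w3) \<le> c * (V2 + V3)"
        using term_sym[OF adm s1 s2 N e nn(1) nn(2) nn(3)] tri big
        unfolding c_def V2_def V3_def w2_def w3_def u1_def u2_def u3_def by (simp add: ac_simps)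
      have t2: "u2^2 / (w1 * w3) \<le> c * (V1 + V3)"
        using term_sym[OF adm s1 s2 N e nn(2) nn(1) nn(3)] tri big
        unfolding c_def V1_def V3_def w1_def w3_def u1_def u2_def u3_def by (simp add: ac_simps)
      have t3: "u3^2 / (w1 * w2) \<le> c * (V1 + V2)"
        using term_sym[OF adm s1 s2 N e nn(3) nn(1) nn(2)] tri big
        unfolding c_def V1_def V2_def w1_def w2_def u1_def u2_def u3_def by (simp add: ac_simps)
      have c0: "0 \<le> c" unfolding c_def using upos by simp
      have V: "V1 \<le> psi \<epsilon> z1" "V2 \<le> psi \<epsilon> z2" "V3 \<le> psi \<epsilon> z3"
        unfolding V1_def V2_def V3_def w1_def w2_def w3_def a1_def a2_def a3_def
        using psi_ge[OF e(1)] by auto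
      have "S / W \<le> c * (2 * (V1 + V2 + V3))" using t1 t2 t3 b2 by (simp add: algebra_simps)
      also have "\<dots> \<le> c * (2 * (psi \<epsilon> z1 + psi \<epsilon> z2 + psi \<epsilon> z3))"
        using V c0 by (intro mult_left_mono) auto
      finally have sw: "S / W \<le> c * (2 * (psi \<epsilon> z1 + psi \<epsilon> z2 + psi \<epsilon> z3))" .
      have "S / (\<gamma>0 * W) = (S / W) / \<gamma>0" by simp
      also have "\<dots> \<le> (c * (2 * (psi \<epsilon> z1 + psi \<epsilon> z2 + psi \<epsilon> z3))) / \<gamma>0"
        using sw g by (intro divide_right_mono) auto
      also have "\<dots> = 16/\<gamma>0 * N powr (\<epsilon>-1) * mI \<mu> N z1 * mI \<mu> N z2 * mI \<mu> N z3
            * (psi \<epsilon> z1 + psi \<epsilon> z2 + psi \<epsilon> z3)"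
        unfolding mI c_def by simp
      finally show ?thesis using b1 by linarith
    qed
  qed
qed

end


lemma ennreal_mult_le_sq: "(a::ennreal) * b \<le> a^2 + b^2"
proof (cases "a \<le> b")
  case True
  then have "a * b \<le> b * b" by (intro mult_right_mono) auto
  also have "\<dots> = b^2" by (simp add: power2_eq_square)
  also have "\<dots> \<le> a^2 + b^2" by simp
  finally show ?thesis .
next
  case False
  then have "a * b \<le> a * a" by (intro mult_left_mono) auto
  also have "\<dots> = a^2" by (simp add: power2_eq_square)
  also have "\<dots> \<le> a^2 + b^2" by simp
  finally show ?thesis .
qed

lemma conv_le:
  fixes B :: "freq \<Rightarrow> ennreal"
  assumes [measurable]: "B \<in> borel_measurable borel"
  shows "(\<integral>\<^sup>+z. B z * B (t - z) \<partial>lborel) \<le> 2 * (\<integral>\<^sup>+z. B z ^ 2 \<partial>lborel)"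
proof -
  have "(\<integral>\<^sup>+z. B z * B (t - z) \<partial>lborel) \<le> (\<integral>\<^sup>+z. B z ^ 2 + B (t - z) ^ 2 \<partial>lborel)"
    by (intro nn_integral_mono ennreal_mult_le_sq)
  also have "\<dots> = (\<integral>\<^sup>+z. B z ^ 2 \<partial>lborel) + (\<integral>\<^sup>+z. B (t - z) ^ 2 \<partial>lborel)"
    by (rule nn_integral_add) measurable
  also have "(\<integral>\<^sup>+z. B (t - z) ^ 2 \<partial>lborel) = (\<integral>\<^sup>+z. B z ^ 2 \<partial>lborel)"
    using nn_integral_reflect[of "\<lambda>z. B z ^ 2" t] by simp
  finally show ?thesis by (simp add: mult_2)
qed

lemma meas_fst[measurable]: "(fst :: freq \<times> freq \<Rightarrow> freq) \<in> borel_measurable borel"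
  by (intro borel_measurable_continuous_onI continuous_intros)
lemma meas_snd[measurable]: "(snd :: freq \<times> freq \<Rightarrow> freq) \<in> borel_measurable borel"
  by (intro borel_measurable_continuous_onI continuous_intros)
lemma meas_m[measurable]: "(\<lambda>p::freq \<times> freq. - fst p - snd p) \<in> borel_measurable borel"
  by (intro borel_measurable_continuous_onI continuous_intros)

lemma negdiff_comm: "- a - b = - b - (a::freq)" by (simp add: algebra_simps)

lemma pair_eq:
  fixes h :: "freq \<times> freq \<Rightarrow> ennreal"
  assumes [measurable]: "h \<in> borel_measurable borel"
  shows "(\<integral>\<^sup>+p. h p \<partial>lborel) = (\<integral>\<^sup>+x. \<integral>\<^sup>+y. h (x, y) \<partial>lborel \<partial>lborel)"
proof -
  have "(\<integral>\<^sup>+p. h p \<partial>lborel) = (\<integral>\<^sup>+p. h p \<partial>(lborel \<Otimes>\<^sub>M lborel))"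
    by (simp add: lborel_prod)
  also have "\<dots> = (\<integral>\<^sup>+x. \<integral>\<^sup>+y. h (x, y) \<partial>lborel \<partial>lborel)"
    by (rule lborel.nn_integral_fst[symmetric]) (unfold lborel_prod, simp)
  finally show ?thesis .
qed

lemma swap_eq:
  fixes h :: "freq \<Rightarrow> freq \<Rightarrow> ennreal"
  assumes [measurable]: "case_prod h \<in> borel_measurable borel"
  shows "(\<integral>\<^sup>+x. \<integral>\<^sup>+y. h x y \<partial>lborel \<partial>lborel) = (\<integral>\<^sup>+y. \<integral>\<^sup>+x. h x y \<partial>lborel \<partial>lborel)"
  by (rule lborel_pair.Fubini'[symmetric]) (simp add: lborel_prod)

context
  fixes A B :: "freq \<Rightarrow> ennreal"
  assumes Am[measurable]: "A \<in> borel_measurable borel" and Bm[measurable]: "B \<in> borel_measurable borel"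
begin

lemma tri1: "(\<integral>\<^sup>+p. A (fst p) * B (snd p) * B (- fst p - snd p) \<partial>lborel)
   \<le> 2 * (\<integral>\<^sup>+z. B z ^ 2 \<partial>lborel) * (\<integral>\<^sup>+z. A z \<partial>lborel)"
proof -
  have "(\<integral>\<^sup>+p. A (fst p) * B (snd p) * B (- fst p - snd p) \<partial>lborel)
      = (\<integral>\<^sup>+x. \<integral>\<^sup>+y. A x * (B y * B ((- x) - y)) \<partial>lborel \<partial>lborel)"
    by (subst pair_eq) (measurable, simp add: mult.assoc)
  also have "\<dots> = (\<integral>\<^sup>+x. A x * \<integral>\<^sup>+y. B y * B ((- x) - y) \<partial>lborel \<partial>lborel)"
    by (intro nn_integral_cong nn_integral_cmult) measurable
  also have "\<dots> \<le> (\<integral>\<^sup>+x. A x * (2 * (\<integral>\<^sup>+z. B z ^ 2 \<partial>lborel)) \<partial>lborel)"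
    by (intro nn_integral_mono mult_left_mono conv_le Bm) auto
  also have "\<dots> = 2 * (\<integral>\<^sup>+z. B z ^ 2 \<partial>lborel) * (\<integral>\<^sup>+z. A z \<partial>lborel)"
    by (subst nn_integral_multc) (simp_all add: mult.commute)
  finally show ?thesis .
qed

lemma m1: "(\<lambda>p. A (fst p) * B (snd p) * B (- fst p - snd p)) \<in> borel_measurable borel"
  by measurable
lemma m2: "(\<lambda>p. B (fst p) * A (snd p) * B (- fst p - snd p)) \<in> borel_measurable borel"
  by measurable
lemma m3: "(\<lambda>p. B (fst p) * B (snd p) * A (- fst p - snd p)) \<in> borel_measurable borel"
  by measurable

lemma tri2: "(\<integral>\<^sup>+p. B (fst p) * A (snd p) * B (- fst p - snd p) \<partial>lborel)
   \<le> 2 * (\<integral>\<^sup>+z. B z ^ 2 \<partial>lborel) * (\<integral>\<^sup>+z. A z \<partial>lborel)"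
proof -
  have "(\<integral>\<^sup>+p. B (fst p) * A (snd p) * B (- fst p - snd p) \<partial>lborel)
      = (\<integral>\<^sup>+x. \<integral>\<^sup>+y. B x * A y * B (- x - y) \<partial>lborel \<partial>lborel)"
    by (subst pair_eq[OF m2]) simp
  also have "\<dots> = (\<integral>\<^sup>+y. \<integral>\<^sup>+x. B x * A y * B (- x - y) \<partial>lborel \<partial>lborel)"
    by (rule swap_eq) simp
  also have "\<dots> = (\<integral>\<^sup>+y. \<integral>\<^sup>+x. A (fst (y, x)) * B (snd (y, x)) * B (- fst (y, x) - snd (y, x)) \<partial>lborel \<partial>lborel)"
    by (intro nn_integral_cong) (metis negdiff_comm fst_conv snd_conv mult.commute mult.left_commute)
  also have "\<dots> = (\<integral>\<^sup>+p. A (fst p) * B (snd p) * B (- fst p - snd p) \<partial>lborel)"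
    by (subst pair_eq[OF m1]) simp
  also have "\<dots> \<le> 2 * (\<integral>\<^sup>+z. B z ^ 2 \<partial>lborel) * (\<integral>\<^sup>+z. A z \<partial>lborel)" by (rule tri1)
  finally show ?thesis .
qed

lemma tri3: "(\<integral>\<^sup>+p. B (fst p) * B (snd p) * A (- fst p - snd p) \<partial>lborel)
   \<le> 2 * (\<integral>\<^sup>+z. B z ^ 2 \<partial>lborel) * (\<integral>\<^sup>+z. A z \<partial>lborel)"
proof -
  have "(\<integral>\<^sup>+p. B (fst p) * B (snd p) * A (- fst p - snd p) \<partial>lborel)
      = (\<integral>\<^sup>+x. \<integral>\<^sup>+y. B x * B y * A (- x - y) \<partial>lborel \<partial>lborel)"
    by (subst pair_eq[OF m3]) simp
  also have "\<dots> = (\<integral>\<^sup>+x. \<integral>\<^sup>+w. B x * B (- x - w) * A w \<partial>lborel \<partial>lborel)"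
  proof -
    have inner: "(\<integral>\<^sup>+y. B x * B y * A (- x - y) \<partial>lborel) = (\<integral>\<^sup>+w. B x * B (- x - w) * A w \<partial>lborel)" for x :: freq
    proof -
      have "(\<integral>\<^sup>+w. B x * B (- x - w) * A w \<partial>lborel) = (\<integral>\<^sup>+y. B x * B (- x - ((- x) - y)) * A ((- x) - y) \<partial>lborel)"
        using nn_integral_reflect[of "\<lambda>w. B x * B (- x - w) * A w" "- x"] by simp
      then show ?thesis by simp
    qed
    show ?thesis by (rule nn_integral_cong) (rule inner)
  qed
  also have "\<dots> = (\<integral>\<^sup>+w. \<integral>\<^sup>+x. B x * B (- x - w) * A w \<partial>lborel \<partial>lborel)"
    by (rule swap_eq) simp
  also have "\<dots> = (\<integral>\<^sup>+w. \<integral>\<^sup>+x. A (fst (w, x)) * B (snd (w, x)) * B (- fst (w, x) - snd (w, x)) \<partial>lborel \<partial>lborel)"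
    by (intro nn_integral_cong) (metis negdiff_comm fst_conv snd_conv mult.commute mult.left_commute)
  also have "\<dots> = (\<integral>\<^sup>+p. A (fst p) * B (snd p) * B (- fst p - snd p) \<partial>lborel)"
    by (subst pair_eq[OF m1]) simp
  also have "\<dots> \<le> 2 * (\<integral>\<^sup>+z. B z ^ 2 \<partial>lborel) * (\<integral>\<^sup>+z. A z \<partial>lborel)" by (rule tri1)
  finally show ?thesis .
qed

end


lemma meas_fstf[measurable]: "(fst :: freq \<Rightarrow> real) \<in> borel_measurable borel"
  by (intro borel_measurable_continuous_onI continuous_intros)
lemma meas_sndf[measurable]: "(snd :: freq \<Rightarrow> real) \<in> borel_measurable borel"
  by (intro borel_measurable_continuous_onI continuous_intros)

lemma psi_meas[measurable]: "psi \<epsilon> \<in> borel_measurable borel"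
  unfolding psi_def by measurable

lemma psi_sq: "(psi \<epsilon> z)^2 = max 1 \<bar>fst z\<bar> powr (-1-\<epsilon>) * max 1 \<bar>snd z\<bar> powr (-1-\<epsilon>)"
proof -
  have "(psi \<epsilon> z)^2 = psi \<epsilon> z * psi \<epsilon> z" by (simp add: power2_eq_square)
  also have "\<dots> = (max 1 \<bar>fst z\<bar> * max 1 \<bar>snd z\<bar>) powr (-(1+\<epsilon>)/2 + -(1+\<epsilon>)/2)"
    unfolding psi_def by (rule powr_add[symmetric])
  also have "\<dots> = (max 1 \<bar>fst z\<bar> * max 1 \<bar>snd z\<bar>) powr (-1-\<epsilon>)" by simp
  also have "\<dots> = max 1 \<bar>fst z\<bar> powr (-1-\<epsilon>) * max 1 \<bar>snd z\<bar> powr (-1-\<epsilon>)"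
    by (rule powr_mult)
  finally show ?thesis .
qed

lemma psi_sq_finite:
  assumes e: "0 < \<epsilon>"
  shows "(\<integral>\<^sup>+z. ennreal ((psi \<epsilon> z)^2) \<partial>(lborel::freq measure)) < \<infinity>"
proof -
  define p where "p x = max 1 \<bar>x\<bar> powr (-1-\<epsilon>)" for x :: real
  have pm[measurable]: "p \<in> borel_measurable borel" unfolding p_def by measurable
  have fin: "(\<integral>\<^sup>+x. ennreal (p x) \<partial>lborel) < \<infinity>"
    unfolding p_def using powr_int_finite[of "-1-\<epsilon>"] e by simp
  have "(\<integral>\<^sup>+z. ennreal ((psi \<epsilon> z)^2) \<partial>(lborel::freq measure)) = (\<integral>\<^sup>+z. ennreal (p (fst z)) * ennreal (p (snd z)) \<partial>(lborel::freq measure))"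
    by (intro nn_integral_cong) (simp add: psi_sq p_def ennreal_mult[symmetric])
  also have "\<dots> = (\<integral>\<^sup>+z. ennreal (p (fst z)) * ennreal (p (snd z)) \<partial>(lborel \<Otimes>\<^sub>M lborel))"
    by (simp add: lborel_prod)
  also have "\<dots> = (\<integral>\<^sup>+x. \<integral>\<^sup>+y. ennreal (p x) * ennreal (p y) \<partial>lborel \<partial>lborel)"
  proof -
    have "(\<lambda>z::freq. ennreal (p (fst z)) * ennreal (p (snd z))) \<in> borel_measurable borel" by measurable
    then have "(\<lambda>z::freq. ennreal (p (fst z)) * ennreal (p (snd z))) \<in> borel_measurable (lborel \<Otimes>\<^sub>M lborel)"
      unfolding lborel_prod by simp
    then show ?thesis by (subst lborel.nn_integral_fst[symmetric]) simp_all
  qed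
  also have "\<dots> = (\<integral>\<^sup>+x. ennreal (p x) * (\<integral>\<^sup>+y. ennreal (p y) \<partial>lborel) \<partial>lborel)"
    by (intro nn_integral_cong nn_integral_cmult) measurable
  also have "\<dots> = (\<integral>\<^sup>+x. ennreal (p x) \<partial>lborel) * (\<integral>\<^sup>+y. ennreal (p y) \<partial>lborel)"
    by (rule nn_integral_multc) measurable
  also have "\<dots> < \<infinity>" using fin by (simp add: ennreal_mult_less_top)
  finally show ?thesis .
qed


lemma dyad_meas[measurable]: "dyad \<in> borel_measurable borel"
  by (rule borel_measurable_mono[OF dyad_mono])

lemma sigma_meas:
  fixes m :: "freq \<Rightarrow> real"
  assumes [measurable]: "m \<in> borel_measurable borel"
  shows "(\<lambda>p::freq \<times> freq. sigma3 m N \<gamma>0 (fst p) (snd p) (- fst p - snd p)) \<in> borel_measurable borel"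
proof -
  have eq: "sigma3 m N \<gamma>0 (fst p) (snd p) (- fst p - snd p) =
     (if max (norm (fst p)) (max (norm (snd p)) (norm (- fst p - snd p))) \<le> N \<or>
         \<gamma>0 * dyad (norm (fst p)) * dyad (norm (snd p)) * dyad (norm (- fst p - snd p))
           \<le> \<bar>fst (fst p) * fst (snd p) * fst (- fst p - snd p) + snd (fst p) * snd (snd p) * snd (- fst p - snd p)\<bar>
      then - 2 * \<i> * complex_of_real
             (m (fst p) ^ 2 * (fst (fst p) + snd (fst p)) + m (snd p) ^ 2 * (fst (snd p) + snd (snd p))
              + m (- fst p - snd p) ^ 2 * (fst (- fst p - snd p) + snd (- fst p - snd p)))
           / (3 * (3 * \<i> * complex_of_real
               (fst (fst p) * fst (snd p) * fst (- fst p - snd p) + snd (fst p) * snd (snd p) * snd (- fst p - snd p))))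
      else 0)" for p :: "freq \<times> freq"
    unfolding sigma3_def Omega_nr_def M3_def h3_def by (simp add: add.assoc)
  define n1 where "n1 = (\<lambda>p::freq \<times> freq. norm (fst p))"
  define n2 where "n2 = (\<lambda>p::freq \<times> freq. norm (snd p))"
  define n3 where "n3 = (\<lambda>p::freq \<times> freq. norm (- fst p - snd p))"
  define Q where "Q = (\<lambda>p::freq \<times> freq. fst (fst p) * fst (snd p) * fst (- fst p - snd p) + snd (fst p) * snd (snd p) * snd (- fst p - snd p))"
  define S1 where "S1 = (\<lambda>p::freq \<times> freq. fst (fst p) + snd (fst p))"
  define S2 where "S2 = (\<lambda>p::freq \<times> freq. fst (snd p) + snd (snd p))"
  define S3 where "S3 = (\<lambda>p::freq \<times> freq. fst (- fst p - snd p) + snd (- fst p - snd p))"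
  define Z where "Z = (\<lambda>p::freq \<times> freq. - fst p - snd p)"
  have [measurable]: "n1 \<in> borel_measurable borel" "n2 \<in> borel_measurable borel" "n3 \<in> borel_measurable borel"
    "Q \<in> borel_measurable borel" "S1 \<in> borel_measurable borel" "S2 \<in> borel_measurable borel"
    "S3 \<in> borel_measurable borel"
    unfolding n1_def n2_def n3_def Q_def S1_def S2_def S3_def
    by (intro borel_measurable_continuous_onI continuous_intros)+
  have [measurable]: "(\<lambda>p::freq \<times> freq. m (fst p)) \<in> borel_measurable borel" "(\<lambda>p::freq \<times> freq. m (snd p)) \<in> borel_measurable borel"
    "(\<lambda>p. m (Z p)) \<in> borel_measurable borel"
  proof -
    have c: "(fst :: freq \<times> freq \<Rightarrow> freq) \<in> borel_measurable borel" "(snd :: freq \<times> freq \<Rightarrow> freq) \<in> borel_measurable borel"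
      "Z \<in> borel_measurable borel"
      unfolding Z_def by (intro borel_measurable_continuous_onI continuous_intros)+
    show "(\<lambda>p::freq \<times> freq. m (fst p)) \<in> borel_measurable borel" by (rule measurable_compose[OF c(1) assms])
    show "(\<lambda>p::freq \<times> freq. m (snd p)) \<in> borel_measurable borel" by (rule measurable_compose[OF c(2) assms])
    show "(\<lambda>p. m (Z p)) \<in> borel_measurable borel" by (rule measurable_compose[OF c(3) assms])
  qed
  have eq2: "sigma3 m N \<gamma>0 (fst p) (snd p) (- fst p - snd p) =
     (if max (n1 p) (max (n2 p) (n3 p)) \<le> N \<or> \<gamma>0 * dyad (n1 p) * dyad (n2 p) * dyad (n3 p) \<le> \<bar>Q p\<bar>
      then - 2 * \<i> * complex_of_real (m (fst p) ^ 2 * S1 p + m (snd p) ^ 2 * S2 p + m (Z p) ^ 2 * S3 p)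
           / (3 * (3 * \<i> * complex_of_real (Q p)))
      else 0)" for p
    unfolding eq n1_def n2_def n3_def Q_def S1_def S2_def S3_def Z_def by simp
  show ?thesis unfolding eq2 by measurable
qed


lemma main_bound:
  fixes s :: real and \<mu> :: "real \<Rightarrow> real" and N e \<gamma>0 :: real and f :: "freq \<Rightarrow> complex"
  assumes adm: "admissible_profile s \<mu>" and s1: "-1/13 < s" and s2: "s < 0"
    and N: "1 \<le> N" and e: "0 < e" "e \<le> 1/2" and g: "0 < \<gamma>0"
    and fm: "f \<in> borel_measurable lborel"
    and fi: "integrable lborel (\<lambda>z. (norm (complex_of_real (mI \<mu> N z) * f z))^2)"
  shows "integrable lborel (Lambda3_integrand (sigma3 (mI \<mu> N) N \<gamma>0) f f f) \<and>
         norm (Lambda3 (sigma3 (mI \<mu> N) N \<gamma>0) f f f)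
           \<le> 96 * sqrt (enn2real (\<integral>\<^sup>+z. ennreal ((psi e z)^2) \<partial>lborel)) / \<gamma>0 * N powr (e-1) * (L2norm_I (mI \<mu> N) f)^3"
proof -
  define m where "m = mI \<mu> N"
  have Npos: "0 < N" using N by simp
  have mpos: "0 < m z" for z unfolding m_def mI_def using mu_pos[OF adm s1 s2] Npos by simp
  have mum[measurable]: "\<mu> \<in> borel_measurable borel"
    using mu_cont[OF adm s1 s2] by (rule borel_measurable_continuous_onI)
  have mm[measurable]: "m \<in> borel_measurable borel" unfolding m_def mI_def by measurable
  have fb[measurable]: "f \<in> borel_measurable borel" using fm by simp
  define F where "F z = m z * norm (f z)" for z
  have F0: "0 \<le> F z" for z unfolding F_def using mpos[of z] by simp
  have Fm[measurable]: "F \<in> borel_measurable borel" unfolding F_def by measurable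
  have Fn: "norm (complex_of_real (m z) * f z) = F z" for z
    unfolding F_def using mpos[of z] by (simp add: norm_mult)
  define \<Phi>r where "\<Phi>r = (\<integral>z. (F z)^2 \<partial>lborel)"
  have Fi: "integrable lborel (\<lambda>z. (F z)^2)" using fi unfolding m_def[symmetric] Fn .
  have \<Phi>0: "0 \<le> \<Phi>r" unfolding \<Phi>r_def by simp
  have \<Phi>e: "(\<integral>\<^sup>+z. ennreal ((F z)^2) \<partial>lborel) = ennreal \<Phi>r"
    unfolding \<Phi>r_def by (rule nn_integral_eq_integral[OF Fi]) simp
  have L2: "L2norm_I (mI \<mu> N) f = sqrt \<Phi>r" unfolding L2norm_I_def \<Phi>r_def m_def[symmetric] Fn ..
  define \<Psi>r where "\<Psi>r = enn2real (\<integral>\<^sup>+z. ennreal ((psi e z)^2) \<partial>lborel)"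
  have \<Psi>e: "(\<integral>\<^sup>+z. ennreal ((psi e z)^2) \<partial>lborel) = ennreal \<Psi>r"
    using psi_sq_finite[OF e(1)] unfolding \<Psi>r_def by (simp add: ennreal_enn2real less_top[symmetric])
  have \<Psi>0: "0 \<le> \<Psi>r" unfolding \<Psi>r_def by simp
  define Fe where "Fe z = ennreal (F z)" for z
  define Ge where "Ge z = ennreal (psi e z * F z)" for z
  have Fem[measurable]: "Fe \<in> borel_measurable borel" unfolding Fe_def by measurable
  have Gem[measurable]: "Ge \<in> borel_measurable borel" unfolding Ge_def by measurable
  have Fe2: "(\<integral>\<^sup>+z. Fe z ^ 2 \<partial>lborel) = ennreal \<Phi>r"
    unfolding Fe_def using F0 \<Phi>e by (simp add: ennreal_power)
  define Ie where "Ie = (\<integral>\<^sup>+z. Ge z \<partial>lborel)"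
  have CS: "Ie^2 \<le> ennreal \<Psi>r * ennreal \<Phi>r"
  proof -
    have "Ie = (\<integral>\<^sup>+z. ennreal (psi e z) * Fe z \<partial>lborel)"
      unfolding Ie_def Ge_def Fe_def using F0 psi_nonneg by (simp add: ennreal_mult)
    then have "Ie^2 \<le> (\<integral>\<^sup>+z. (ennreal (psi e z))^2 \<partial>lborel) * (\<integral>\<^sup>+z. (Fe z)^2 \<partial>lborel)"
      using Cauchy_Schwarz_nn_integral[of "\<lambda>z. ennreal (psi e z)" lborel Fe] by simp
    also have "(\<integral>\<^sup>+z. (ennreal (psi e z))^2 \<partial>lborel) = ennreal \<Psi>r"
      using \<Psi>e psi_nonneg by (simp add: ennreal_power)
    finally show ?thesis using Fe2 by simp
  qed
  have Iefin: "Ie \<noteq> \<infinity>"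
  proof
    assume "Ie = \<infinity>"
    then have "Ie^2 = \<infinity>" by simp
    with CS show False by (simp add: ennreal_mult[symmetric] \<Psi>0 \<Phi>0 top_unique)
  qed
  define Ir where "Ir = enn2real Ie"
  have IeIr: "Ie = ennreal Ir" unfolding Ir_def using Iefin by (simp add: ennreal_enn2real less_top[symmetric])
  have Ir0: "0 \<le> Ir" unfolding Ir_def by simp
  have Ir_le: "Ir \<le> sqrt \<Psi>r * sqrt \<Phi>r"
  proof -
    have "ennreal (Ir^2) \<le> ennreal (\<Psi>r * \<Phi>r)"
      using CS \<Psi>0 \<Phi>0 Ir0 unfolding IeIr by (simp add: ennreal_mult ennreal_power)
    then have "Ir^2 \<le> \<Psi>r * \<Phi>r" using \<Psi>0 \<Phi>0 by (simp add: ennreal_le_iff)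
    then have "Ir \<le> sqrt (\<Psi>r * \<Phi>r)" by (rule real_le_rsqrt)
    then show ?thesis by (simp add: real_sqrt_mult)
  qed
  define c where "c = 16/\<gamma>0 * N powr (e-1)"
  have c0: "0 \<le> c" unfolding c_def using g by simp
  define T where "T p = Ge (fst p) * Fe (snd p) * Fe (- fst p - snd p) + Fe (fst p) * Ge (snd p) * Fe (- fst p - snd p)
      + Fe (fst p) * Fe (snd p) * Ge (- fst p - snd p)" for p :: "freq \<times> freq"
  define I3 where "I3 = Lambda3_integrand (sigma3 m N \<gamma>0) f f f"
  have I3eq: "I3 = (\<lambda>p. sigma3 m N \<gamma>0 (fst p) (snd p) (- fst p - snd p) * f (fst p) * f (snd p) * f (- fst p - snd p))"
    unfolding I3_def Lambda3_integrand_def by (simp add: fun_eq_iff split_beta)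
  have sm[measurable]: "(\<lambda>p::freq \<times> freq. sigma3 m N \<gamma>0 (fst p) (snd p) (- fst p - snd p)) \<in> borel_measurable borel"
    by (rule sigma_meas[OF mm])
  have I3m[measurable]: "I3 \<in> borel_measurable borel" unfolding I3eq by measurable
  have pw: "ennreal (norm (I3 p)) \<le> ennreal c * T p" for p
  proof -
    obtain z1 z2 where p: "p = (z1, z2)" by (cases p)
    define z3 where "z3 = - z1 - z2"
    have sum: "z1 + z2 + z3 = 0" unfolding z3_def by simp
    have sb: "norm (sigma3 m N \<gamma>0 z1 z2 z3) \<le> c * m z1 * m z2 * m z3 * (psi e z1 + psi e z2 + psi e z3)"
      using sigma_bound[OF adm s1 s2 N e g sum] unfolding m_def c_def by simp
    have "norm (I3 p) = norm (sigma3 m N \<gamma>0 z1 z2 z3) * (norm (f z1) * norm (f z2) * norm (f z3))"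
      unfolding I3eq p z3_def by (simp add: norm_mult)
    also have "\<dots> \<le> (c * m z1 * m z2 * m z3 * (psi e z1 + psi e z2 + psi e z3)) * (norm (f z1) * norm (f z2) * norm (f z3))"
      using sb by (intro mult_right_mono) auto
    also have "\<dots> = c * ((psi e z1 * F z1) * F z2 * F z3 + F z1 * (psi e z2 * F z2) * F z3 + F z1 * F z2 * (psi e z3 * F z3))"
      unfolding F_def by (simp add: algebra_simps)
    finally have r: "norm (I3 p) \<le> c * ((psi e z1 * F z1) * F z2 * F z3 + F z1 * (psi e z2 * F z2) * F z3 + F z1 * F z2 * (psi e z3 * F z3))" .
    have nn: "0 \<le> psi e z * F z" for z using psi_nonneg F0 by simp
    have "ennreal (norm (I3 p)) \<le> ennreal (c * ((psi e z1 * F z1) * F z2 * F z3 + F z1 * (psi e z2 * F z2) * F z3 + F z1 * F z2 * (psi e z3 * F z3)))"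
      using r by (rule ennreal_leI)
    also have "\<dots> = ennreal c * T p"
      unfolding T_def p Ge_def Fe_def using c0 F0 nn
      by (simp add: ennreal_mult ennreal_plus add_nonneg_nonneg z3_def)
    finally show ?thesis .
  qed
  have Tm1: "(\<lambda>p. Ge (fst p) * Fe (snd p) * Fe (- fst p - snd p)) \<in> borel_measurable borel" by measurable
  have Tm2: "(\<lambda>p. Fe (fst p) * Ge (snd p) * Fe (- fst p - snd p)) \<in> borel_measurable borel" by measurable
  have Tm3: "(\<lambda>p. Fe (fst p) * Fe (snd p) * Ge (- fst p - snd p)) \<in> borel_measurable borel" by measurable
  have A1: "(\<integral>\<^sup>+p. ennreal (norm (I3 p)) \<partial>lborel) \<le> ennreal c * (\<integral>\<^sup>+p. T p \<partial>lborel)"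
  proof -
    have "(\<integral>\<^sup>+p. ennreal (norm (I3 p)) \<partial>lborel) \<le> (\<integral>\<^sup>+p. ennreal c * T p \<partial>lborel)"
      by (intro nn_integral_mono pw)
    also have "\<dots> = ennreal c * (\<integral>\<^sup>+p. T p \<partial>lborel)"
      by (rule nn_integral_cmult) (simp add: T_def)
    finally show ?thesis .
  qed
  have A2: "(\<integral>\<^sup>+p. T p \<partial>lborel) \<le> ennreal (6 * \<Phi>r * Ir)"
  proof -
    have "(\<integral>\<^sup>+p. T p \<partial>lborel) = (\<integral>\<^sup>+p. Ge (fst p) * Fe (snd p) * Fe (- fst p - snd p) \<partial>lborel)
      + (\<integral>\<^sup>+p. Fe (fst p) * Ge (snd p) * Fe (- fst p - snd p) \<partial>lborel)
      + (\<integral>\<^sup>+p. Fe (fst p) * Fe (snd p) * Ge (- fst p - snd p) \<partial>lborel)"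
      unfolding T_def using Tm1 Tm2 Tm3 by (simp add: nn_integral_add)
    also have "\<dots> \<le> 2 * ennreal \<Phi>r * Ie + 2 * ennreal \<Phi>r * Ie + 2 * ennreal \<Phi>r * Ie"
      using tri1[OF Gem Fem] tri2[OF Gem Fem] tri3[OF Gem Fem] unfolding Fe2 Ie_def[symmetric]
      by (intro add_mono) auto
    also have "2 * ennreal \<Phi>r * Ie + 2 * ennreal \<Phi>r * Ie + 2 * ennreal \<Phi>r * Ie = ennreal (6 * \<Phi>r * Ir)"
    proof -
      have e6: "ennreal (6 * \<Phi>r * Ir) = 6 * (ennreal \<Phi>r * ennreal Ir)" using \<Phi>0 Ir0 by (simp add: ennreal_mult mult.assoc)
      have "2 * ennreal \<Phi>r * ennreal Ir + 2 * ennreal \<Phi>r * ennreal Ir + 2 * ennreal \<Phi>r * ennreal Ir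
          = (2 + 2 + 2) * (ennreal \<Phi>r * ennreal Ir)" by (simp only: distrib_right mult.assoc)
      also have "(2 + 2 + 2 :: ennreal) = 6" by simp
      finally show ?thesis unfolding IeIr e6 .
    qed
    finally show ?thesis .
  qed
  have main: "(\<integral>\<^sup>+p. ennreal (norm (I3 p)) \<partial>lborel) \<le> ennreal (c * (6 * \<Phi>r * Ir))"
  proof -
    have "ennreal c * (\<integral>\<^sup>+p. T p \<partial>lborel) \<le> ennreal c * ennreal (6 * \<Phi>r * Ir)"
      using A2 by (rule mult_left_mono) simp
    also have "\<dots> = ennreal (c * (6 * \<Phi>r * Ir))" using c0 \<Phi>0 Ir0 by (simp add: ennreal_mult)
    finally show ?thesis using A1 by (rule order_trans[rotated])
  qed
  have int: "integrable lborel I3"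
    using main by (intro integrableI_bounded) (auto simp: top_unique less_top[symmetric] intro: order.strict_trans1)
  have "norm (Lambda3 (sigma3 (mI \<mu> N) N \<gamma>0) f f f) \<le> (\<integral>p. norm (I3 p) \<partial>lborel)"
    unfolding Lambda3_def I3_def m_def by (rule integral_norm_bound)
  also have "\<dots> \<le> c * (6 * \<Phi>r * Ir)"
  proof -
    have "ennreal (\<integral>p. norm (I3 p) \<partial>lborel) = (\<integral>\<^sup>+p. ennreal (norm (I3 p)) \<partial>lborel)"
      using int by (intro nn_integral_eq_integral[symmetric]) auto
    then have "ennreal (\<integral>p. norm (I3 p) \<partial>lborel) \<le> ennreal (c * (6 * \<Phi>r * Ir))" using main by simp
    then show ?thesis using c0 \<Phi>0 Ir0 by (simp add: ennreal_le_iff)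
  qed
  also have "\<dots> \<le> c * (6 * \<Phi>r * (sqrt \<Psi>r * sqrt \<Phi>r))"
    using Ir_le c0 \<Phi>0 by (intro mult_left_mono) auto
  also have "\<dots> = 96 * sqrt \<Psi>r / \<gamma>0 * N powr (e-1) * (sqrt \<Phi>r)^3"
  proof -
    have "\<Phi>r = (sqrt \<Phi>r)^2" using \<Phi>0 by simp
    then have "\<Phi>r * sqrt \<Phi>r = (sqrt \<Phi>r)^3" by (metis power2_eq_square power3_eq_cube)
    then show ?thesis unfolding c_def by (simp add: field_simps)
  qed
  finally show ?thesis using int unfolding I3_def m_def L2 \<Psi>r_def by simp
qed


theorem proposition3p3:
  fixes s :: real and \<mu> :: "real \<Rightarrow> real"
  assumes "- 1/13 < s" and "s < 0" and "admissible_profile s \<mu>"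
  shows "\<forall>\<epsilon>>0. \<exists>C>0. \<exists>N0\<ge>1. \<forall>N\<ge>N0. \<forall>\<gamma>0. \<forall>f :: freq \<Rightarrow> complex.
           0 < \<gamma>0 \<and> \<gamma>0 < 2 powr (-30) \<and> f \<in> borel_measurable lborel \<and>
           integrable lborel (\<lambda>z. (norm (complex_of_real (mI \<mu> N z) * f z))^2)
           \<longrightarrow> integrable lborel (Lambda3_integrand (sigma3 (mI \<mu> N) N \<gamma>0) f f f) \<and>
               norm (Lambda3 (sigma3 (mI \<mu> N) N \<gamma>0) f f f)
                 \<le> C * (1 / \<gamma>0) * N powr (-1 + \<epsilon>) * (L2norm_I (mI \<mu> N) f)^3"
proof (intro allI impI)
  fix \<epsilon> :: real assume \<epsilon>: "\<epsilon> > 0"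
  define e where "e = min \<epsilon> (1/2)"
  have e: "0 < e" "e \<le> 1/2" "e \<le> \<epsilon>" unfolding e_def using \<epsilon> by auto
  define K where "K = 96 * sqrt (enn2real (\<integral>\<^sup>+z. ennreal ((psi e z)^2) \<partial>lborel))"
  have K0: "0 \<le> K" unfolding K_def by simp
  have "\<forall>N\<ge>1. \<forall>\<gamma>0. \<forall>f :: freq \<Rightarrow> complex.
           0 < \<gamma>0 \<and> \<gamma>0 < 2 powr (-30) \<and> f \<in> borel_measurable lborel \<and>
           integrable lborel (\<lambda>z. (norm (complex_of_real (mI \<mu> N z) * f z))^2)
           \<longrightarrow> integrable lborel (Lambda3_integrand (sigma3 (mI \<mu> N) N \<gamma>0) f f f) \<and>
               norm (Lambda3 (sigma3 (mI \<mu> N) N \<gamma>0) f f f)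
                 \<le> (K + 1) * (1 / \<gamma>0) * N powr (-1 + \<epsilon>) * (L2norm_I (mI \<mu> N) f)^3"
  proof (intro allI impI)
    fix N \<gamma>0 :: real and f :: "freq \<Rightarrow> complex"
    assume N: "1 \<le> N"
    assume H: "0 < \<gamma>0 \<and> \<gamma>0 < 2 powr (-30) \<and> f \<in> borel_measurable lborel \<and>
           integrable lborel (\<lambda>z. (norm (complex_of_real (mI \<mu> N z) * f z))^2)"
    then have g: "0 < \<gamma>0" and fm: "f \<in> borel_measurable lborel"
      and fi: "integrable lborel (\<lambda>z. (norm (complex_of_real (mI \<mu> N z) * f z))^2)" by auto
    note mb = main_bound[OF assms(3) assms(1) assms(2) N e(1) e(2) g fm fi]
    define L where "L = L2norm_I (mI \<mu> N) f"
    have L0: "0 \<le> L" unfolding L_def L2norm_I_def by simp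
    have X0: "0 \<le> 1 / \<gamma>0 * L^3" using g L0 by simp
    have P: "N powr (e-1) \<le> N powr (-1 + \<epsilon>)" using N e by (intro powr_mono) auto
    have "96 * sqrt (enn2real (\<integral>\<^sup>+z. ennreal ((psi e z)^2) \<partial>lborel)) / \<gamma>0 * N powr (e-1) * L^3
        = K * N powr (e-1) * (1 / \<gamma>0 * L^3)" unfolding K_def by simp
    also have "\<dots> \<le> (K + 1) * N powr (-1 + \<epsilon>) * (1 / \<gamma>0 * L^3)"
      using P K0 X0 by (intro mult_right_mono mult_mono) auto
    also have "\<dots> = (K + 1) * (1 / \<gamma>0) * N powr (-1 + \<epsilon>) * L^3" by simp
    finally show "integrable lborel (Lambda3_integrand (sigma3 (mI \<mu> N) N \<gamma>0) f f f) \<and>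
               norm (Lambda3 (sigma3 (mI \<mu> N) N \<gamma>0) f f f)
                 \<le> (K + 1) * (1 / \<gamma>0) * N powr (-1 + \<epsilon>) * (L2norm_I (mI \<mu> N) f)^3"
      using mb unfolding L_def by linarith
  qed
  moreover have "0 < K + 1" using K0 by simp
  ultimately show "\<exists>C>0. \<exists>N0\<ge>1. \<forall>N\<ge>N0. \<forall>\<gamma>0. \<forall>f :: freq \<Rightarrow> complex.
           0 < \<gamma>0 \<and> \<gamma>0 < 2 powr (-30) \<and> f \<in> borel_measurable lborel \<and>
           integrable lborel (\<lambda>z. (norm (complex_of_real (mI \<mu> N z) * f z))^2)
           \<longrightarrow> integrable lborel (Lambda3_integrand (sigma3 (mI \<mu> N) N \<gamma>0) f f f) \<and>
               norm (Lambda3 (sigma3 (mI \<mu> N) N \<gamma>0) f f f)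
                 \<le> C * (1 / \<gamma>0) * N powr (-1 + \<epsilon>) * (L2norm_I (mI \<mu> N) f)^3"
    by (intro exI[of _ "K + 1"] conjI exI[of _ 1]) auto
qed


end
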